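(* Let $f\in\mathbb{R}[x,y]$ be a polynomial of degree $n$ with homogeneous decomposition $f=\sum_{i=0}^n f_i$, and let $\mathrm{II}_f=f_{xx}dx^2+2f_{xy}\,dx\,dy+f_{yy}dy^2$. Let $\varrho:\mathbb{R}^3\setminus\{\omega=0\}\to\mathbb{R}^2$, $\varrho(u,v,\omega)=(u/\omega,v/\omega)$. Set $F(u,v,\omega)=\sum_{i=0}^n\omega^{n-i}f_i(u,v)$ and $A=-uF_{uu}-vF_{uv}$, $B=-uF_{uv}-vF_{vv}$, $S=u^2F_{uu}+2uvF_{uv}+v^2F_{vv}$ (all evaluated at $(u,v,\omega)$), and let $Q$ be the quadratic differential form on $\mathbb{R}^3$ $$Q=\omega^2F_{uu}\,du^2+2\omega^2F_{uv}\,du\,dv+\omega^2F_{vv}\,dv^2+2\omega A\,du\,d\omega+2\omega B\,dv\,d\omega+S\,d\omega^2 .$$ Then on $\mathbb{R}^3\setminus\{\omega=0\}$ one has $Q=\omega^{n+2}\varrho^*(\mathrm{II}_f)$. Consequently the restriction of $Q$ to the unit sphere $\mathbb{S}^2=\{u^2+v^2+\omega^2=1\}$ is an analytic quadratic differential form on $\mathbb{S}^2$ which, on each open hemisphere $\{\omega>0\}$ and $\{\omega<0\}$, is a nonvanishing multiple of the form induced from $\mathrm{II}_f$ by the Poincaré projections (so it extends these induced forms to the whole sphere), and the equator $\{\omega=0\}\cap\mathbb{S}^2$ is an integral curve of the fields of lines defined on $\mathbb{S}^2$ by this form.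
   Context: The Poincaré projections are $s_{1,2}:\mathbb{R}^2\to\mathbb{S}^2$, $s_{1}(x,y)=(x,y,1)/\sqrt{1+x^2+y^2}$, $s_2=-s_1$; their inverses on the open upper and lower hemispheres are the restrictions of $\varrho$. The induced forms are $(s_i^{-1})^*\mathrm{II}_f$ on the respective open hemispheres. The fields of lines defined by a quadratic differential form $Q$ on $\mathbb{S}^2$ assign to a point $p$ the directions $\xi\in T_p\mathbb{S}^2$ with $Q_p(\xi,\xi)=0$; the solutions of $\mathrm{II}_f=0$ in the plane are the (projected) fields of asymptotic directions of the graph of $f$. *)

theory Defs
  imports "HOL-Analysis.Analysis"
begin

text \<open>A real polynomial in two variables of degree at most n, given by its coefficients
  c i j (coefficient of x^i y^j); c i j is only used for i + j \<le> n.\<close>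
definition poly2 :: "(nat \<Rightarrow> nat \<Rightarrow> real) \<Rightarrow> nat \<Rightarrow> real \<Rightarrow> real \<Rightarrow> real" where
  "poly2 c n x y = (\<Sum>i\<le>n. \<Sum>j\<le>n - i. c i j * x ^ i * y ^ j)"

definition homc :: "(nat \<Rightarrow> nat \<Rightarrow> real) \<Rightarrow> nat \<Rightarrow> real \<Rightarrow> real \<Rightarrow> real" where
  "homc c k u v = (\<Sum>i\<le>k. c i (k - i) * u ^ i * v ^ (k - i))"

definition has_degree :: "(nat \<Rightarrow> nat \<Rightarrow> real) \<Rightarrow> nat \<Rightarrow> bool" where
  "has_degree c n \<longleftrightarrow> (\<exists>i j. i + j = n \<and> c i j \<noteq> 0)"

definition Fhom :: "(nat \<Rightarrow> nat \<Rightarrow> real) \<Rightarrow> nat \<Rightarrow> real \<Rightarrow> real \<Rightarrow> real \<Rightarrow> real" where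
  "Fhom c n u v w = (\<Sum>i\<le>n. w ^ (n - i) * homc c i u v)"

definition dxx :: "(real \<Rightarrow> real \<Rightarrow> real) \<Rightarrow> real \<Rightarrow> real \<Rightarrow> real" where
  "dxx g x y = deriv (\<lambda>x. deriv (\<lambda>x. g x y) x) x"
definition dxy :: "(real \<Rightarrow> real \<Rightarrow> real) \<Rightarrow> real \<Rightarrow> real \<Rightarrow> real" where
  "dxy g x y = deriv (\<lambda>y. deriv (\<lambda>x. g x y) x) y"
definition dyy :: "(real \<Rightarrow> real \<Rightarrow> real) \<Rightarrow> real \<Rightarrow> real \<Rightarrow> real" where
  "dyy g x y = deriv (\<lambda>y. deriv (\<lambda>y. g x y) y) y"

definition IIf :: "(real \<Rightarrow> real \<Rightarrow> real) \<Rightarrow> real \<times> real \<Rightarrow> real \<times> real \<Rightarrow> real" where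
  "IIf g p \<xi> = (case p of (x, y) \<Rightarrow> case \<xi> of (a, b) \<Rightarrow>
      dxx g x y * a\<^sup>2 + 2 * dxy g x y * a * b + dyy g x y * b\<^sup>2)"

definition Fuu :: "(nat \<Rightarrow> nat \<Rightarrow> real) \<Rightarrow> nat \<Rightarrow> real \<Rightarrow> real \<Rightarrow> real \<Rightarrow> real" where
  "Fuu c n u v w = dxx (\<lambda>u v. Fhom c n u v w) u v"
definition Fuv :: "(nat \<Rightarrow> nat \<Rightarrow> real) \<Rightarrow> nat \<Rightarrow> real \<Rightarrow> real \<Rightarrow> real \<Rightarrow> real" where
  "Fuv c n u v w = dxy (\<lambda>u v. Fhom c n u v w) u v"
definition Fvv :: "(nat \<Rightarrow> nat \<Rightarrow> real) \<Rightarrow> nat \<Rightarrow> real \<Rightarrow> real \<Rightarrow> real \<Rightarrow> real" where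
  "Fvv c n u v w = dyy (\<lambda>u v. Fhom c n u v w) u v"

definition Acoef :: "(nat \<Rightarrow> nat \<Rightarrow> real) \<Rightarrow> nat \<Rightarrow> real \<Rightarrow> real \<Rightarrow> real \<Rightarrow> real" where
  "Acoef c n u v w = - u * Fuu c n u v w - v * Fuv c n u v w"
definition Bcoef :: "(nat \<Rightarrow> nat \<Rightarrow> real) \<Rightarrow> nat \<Rightarrow> real \<Rightarrow> real \<Rightarrow> real \<Rightarrow> real" where
  "Bcoef c n u v w = - u * Fuv c n u v w - v * Fvv c n u v w"
definition Scoef :: "(nat \<Rightarrow> nat \<Rightarrow> real) \<Rightarrow> nat \<Rightarrow> real \<Rightarrow> real \<Rightarrow> real \<Rightarrow> real" where
  "Scoef c n u v w = u\<^sup>2 * Fuu c n u v w + 2 * u * v * Fuv c n u v w + v\<^sup>2 * Fvv c n u v w"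

definition Qform :: "(nat \<Rightarrow> nat \<Rightarrow> real) \<Rightarrow> nat \<Rightarrow> real \<times> real \<times> real \<Rightarrow> real \<times> real \<times> real \<Rightarrow> real" where
  "Qform c n p \<xi> = (case p of (u, v, w) \<Rightarrow> case \<xi> of (du, dv, dw) \<Rightarrow>
      w\<^sup>2 * Fuu c n u v w * du\<^sup>2 + 2 * w\<^sup>2 * Fuv c n u v w * du * dv + w\<^sup>2 * Fvv c n u v w * dv\<^sup>2
      + 2 * w * Acoef c n u v w * du * dw + 2 * w * Bcoef c n u v w * dv * dw
      + Scoef c n u v w * dw\<^sup>2)"

text \<open>The central projection rho(u,v,w) = (u/w, v/w); its restrictions to the open hemispheres
  are the inverses of the Poincare projections s_1, s_2.\<close>
definition rho :: "real \<times> real \<times> real \<Rightarrow> real \<times> real" where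
  "rho p = (case p of (u, v, w) \<Rightarrow> (u / w, v / w))"

definition sphere2 :: "(real \<times> real \<times> real) set" where
  "sphere2 = {(u, v, w). u\<^sup>2 + v\<^sup>2 + w\<^sup>2 = 1}"

definition tangent_S2 :: "real \<times> real \<times> real \<Rightarrow> real \<times> real \<times> real \<Rightarrow> bool" where
  "tangent_S2 p \<xi> = (case p of (u, v, w) \<Rightarrow> case \<xi> of (a, b, d) \<Rightarrow> u * a + v * b + w * d = 0)"

text \<open>Real polynomial function in three variables (implies real analyticity).\<close>
definition poly3_fun :: "(real \<Rightarrow> real \<Rightarrow> real \<Rightarrow> real) \<Rightarrow> bool" where
  "poly3_fun g \<longleftrightarrow> (\<exists>N (a :: nat \<Rightarrow> nat \<Rightarrow> nat \<Rightarrow> real). \<forall>u v w.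
      g u v w = (\<Sum>i\<le>N. \<Sum>j\<le>N. \<Sum>k\<le>N. a i j k * u ^ i * v ^ j * w ^ k))"

end

theory Submission imports Defs begin


definition G2 :: "nat set \<Rightarrow> (nat \<Rightarrow> nat set) \<Rightarrow> (nat \<Rightarrow> nat \<Rightarrow> real) \<Rightarrow> (nat \<Rightarrow> nat \<Rightarrow> nat) \<Rightarrow> (nat \<Rightarrow> nat \<Rightarrow> nat) \<Rightarrow> real \<Rightarrow> real \<Rightarrow> real" where
  "G2 K I b p q x y = (\<Sum>k\<in>K. \<Sum>i\<in>I k. b k i * x ^ p k i * y ^ q k i)"

lemma G2_dx:
  assumes "finite K" "\<And>k. finite (I k)"
  shows "deriv (\<lambda>x. G2 K I b p q x y) x = G2 K I (\<lambda>k i. b k i * real (p k i)) (\<lambda>k i. p k i - 1) q x y"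
  unfolding G2_def
  apply (rule DERIV_imp_deriv)
  apply (rule DERIV_sum)+
  apply (auto intro!: derivative_eq_intros)
  done

lemma G2_dy:
  assumes "finite K" "\<And>k. finite (I k)"
  shows "deriv (\<lambda>y. G2 K I b p q x y) y = G2 K I (\<lambda>k i. b k i * real (q k i)) p (\<lambda>k i. q k i - 1) x y"
  unfolding G2_def
  apply (rule DERIV_imp_deriv)
  apply (rule DERIV_sum)+
  apply (auto intro!: derivative_eq_intros)
  done

lemma Fhom_G2: "(\<lambda>u v. Fhom c n u v w) = G2 {..n} (\<lambda>k. {..k}) (\<lambda>k i. w^(n-k) * c i (k-i)) (\<lambda>k i. i) (\<lambda>k i. k - i)"
  unfolding Fhom_def G2_def homc_def
  by (auto simp: fun_eq_iff sum_distrib_left mult.assoc)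

lemma G2_dx_fun:
  assumes "finite K" "\<And>k. finite (I k)"
  shows "deriv (\<lambda>x. G2 K I b p q x y) = (\<lambda>x. G2 K I (\<lambda>k i. b k i * real (p k i)) (\<lambda>k i. p k i - 1) q x y)"
  using G2_dx[OF assms] by auto

lemma G2_dy_fun:
  assumes "finite K" "\<And>k. finite (I k)"
  shows "deriv (G2 K I b p q x) = G2 K I (\<lambda>k i. b k i * real (q k i)) p (\<lambda>k i. q k i - 1) x"
  using G2_dy[OF assms] by auto

lemma Fuu_G2: "Fuu c n u v w = G2 {..n} (\<lambda>k. {..k}) (\<lambda>k i. w^(n-k) * c i (k-i) * real i * real (i - 1)) (\<lambda>k i. i - 1 - 1) (\<lambda>k i. k - i) u v"
proof -
  have eq: "Fuu c n u v w = deriv (\<lambda>x. deriv (\<lambda>x. G2 {..n} (\<lambda>k. {..k}) (\<lambda>k i. w^(n-k) * c i (k-i)) (\<lambda>k i. i) (\<lambda>k i. k - i) x v) x) u"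
    unfolding Fuu_def dxx_def by (simp add: Fhom_G2[symmetric])
  show ?thesis unfolding eq
    by (simp only: G2_dx_fun[of "{..n}" "\<lambda>k. {..k}"] finite_atMost mult.assoc)
qed

lemma Fuv_G2: "Fuv c n u v w = G2 {..n} (\<lambda>k. {..k}) (\<lambda>k i. w^(n-k) * c i (k-i) * real i * real (k - i)) (\<lambda>k i. i - 1) (\<lambda>k i. k - i - 1) u v"
proof -
  have eq: "Fuv c n u v w = deriv (\<lambda>y. deriv (\<lambda>x. G2 {..n} (\<lambda>k. {..k}) (\<lambda>k i. w^(n-k) * c i (k-i)) (\<lambda>k i. i) (\<lambda>k i. k - i) x y) u) v"
    unfolding Fuv_def dxy_def by (simp add: Fhom_G2[symmetric])
  show ?thesis unfolding eq
    by (simp only: G2_dx_fun[of "{..n}" "\<lambda>k. {..k}"] G2_dy_fun[of "{..n}" "\<lambda>k. {..k}"] finite_atMost mult.assoc)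
qed

lemma Fvv_G2: "Fvv c n u v w = G2 {..n} (\<lambda>k. {..k}) (\<lambda>k i. w^(n-k) * c i (k-i) * real (k - i) * real (k - i - 1)) (\<lambda>k i. i) (\<lambda>k i. k - i - 1 - 1) u v"
proof -
  have eq: "Fvv c n u v w = deriv (\<lambda>y. deriv (\<lambda>y. G2 {..n} (\<lambda>k. {..k}) (\<lambda>k i. w^(n-k) * c i (k-i)) (\<lambda>k i. i) (\<lambda>k i. k - i) u y) y) v"
    unfolding Fvv_def dyy_def by (simp add: Fhom_G2[symmetric])
  show ?thesis unfolding eq
    by (simp only: G2_dy_fun[of "{..n}" "\<lambda>k. {..k}"] finite_atMost mult.assoc)
qed

lemma poly2_Fhom: "poly2 c n = (\<lambda>x y. Fhom c n x y 1)"
proof (intro ext)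
  fix x y
  have S: "Sigma {..n} (\<lambda>i. {..n-i}) = {(i,j). i + j \<le> n}" by auto
  have "poly2 c n x y = (\<Sum>(i,j)\<in>Sigma {..n} (\<lambda>i. {..n-i}). c i j * x ^ i * y ^ j)"
    unfolding poly2_def by (simp add: sum.Sigma)
  also have "\<dots> = (\<Sum>k\<le>n. \<Sum>i\<le>k. c i (k-i) * x ^ i * y ^ (k-i))"
    unfolding S by (rule sum.triangle_reindex_eq)
  finally show "poly2 c n x y = Fhom c n x y 1" unfolding Fhom_def homc_def by simp
qed

lemma pow_scale:
  fixes w u v :: real
  assumes w: "w \<noteq> 0" and k: "a + b + 2 = k" "k \<le> n"
  shows "w ^ n * ((u / w) ^ a * (v / w) ^ b) = w^2 * w^(n-k) * (u ^ a * v ^ b)"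
proof -
  have nn: "n = (n-k)+a+b+2" using k by arith
  have "w ^ n = w^(n-k) * w^a * w^b * w^2"
    by (subst nn) (simp only: power_add)
  then show ?thesis using w by (simp add: power_divide field_simps)
qed

lemma G2_scale:
  fixes w u v :: real
  assumes w: "w \<noteq> 0"
    and h: "\<And>k i. k \<le> n \<Longrightarrow> i \<le> k \<Longrightarrow> d k i \<noteq> 0 \<Longrightarrow> p k i + q k i + 2 = k"
  shows "w ^ n * G2 {..n} (\<lambda>k. {..k}) (\<lambda>k i. 1^(n-k) * d k i) p q (u/w) (v/w)
       = w^2 * G2 {..n} (\<lambda>k. {..k}) (\<lambda>k i. w^(n-k) * d k i) p q u v"
  unfolding G2_def sum_distrib_left
proof (intro sum.cong refl)
  fix k i assume ki: "k \<in> {..n}" "i \<in> {..k}"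
  show "w ^ n * (1 ^ (n - k) * d k i * (u / w) ^ p k i * (v / w) ^ q k i) =
        w\<^sup>2 * (w ^ (n - k) * d k i * u ^ p k i * v ^ q k i)"
  proof (cases "d k i = 0")
    case False
    then have "p k i + q k i + 2 = k" using h ki by auto
    from pow_scale[OF w this, of n u v] ki
    show ?thesis by (simp add: algebra_simps)
  qed simp
qed

lemma Fuu_scale: "w \<noteq> 0 \<Longrightarrow> w ^ n * Fuu c n (u/w) (v/w) 1 = w^2 * Fuu c n u v w"
  unfolding Fuu_G2 mult.assoc
  by (rule G2_scale[where d="\<lambda>k i. c i (k-i) * (real i * real (i - 1))"]) auto

lemma Fuv_scale: "w \<noteq> 0 \<Longrightarrow> w ^ n * Fuv c n (u/w) (v/w) 1 = w^2 * Fuv c n u v w"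
  unfolding Fuv_G2 mult.assoc
  by (rule G2_scale[where d="\<lambda>k i. c i (k-i) * (real i * real (k - i))"]) auto

lemma Fvv_scale: "w \<noteq> 0 \<Longrightarrow> w ^ n * Fvv c n (u/w) (v/w) 1 = w^2 * Fvv c n u v w"
  unfolding Fvv_G2 mult.assoc
  by (rule G2_scale[where d="\<lambda>k i. c i (k-i) * (real (k - i) * real (k - i - 1))"]) auto

lemma rho_deriv:
  assumes w: "w \<noteq> 0"
  shows "frechet_derivative rho (at (u, v, w)) =
    (\<lambda>h. ((fst h * w - u * snd (snd h)) / (w * w), (fst (snd h) * w - v * snd (snd h)) / (w * w)))"
proof -
  have r: "rho = (\<lambda>p. (fst p / snd (snd p), fst (snd p) / snd (snd p)))"
    by (auto simp: rho_def fun_eq_iff split: prod.splits)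
  have "(rho has_derivative (\<lambda>h. ((fst h * w - u * snd (snd h)) / (w * w), (fst (snd h) * w - v * snd (snd h)) / (w * w)))) (at (u, v, w))"
    unfolding r using w
    by (auto intro!: derivative_eq_intros)
  then show ?thesis by (rule frechet_derivative_at[symmetric])
qed

lemma dxx_poly2: "dxx (poly2 c n) x y = Fuu c n x y 1"
  unfolding Fuu_def poly2_Fhom ..
lemma dxy_poly2: "dxy (poly2 c n) x y = Fuv c n x y 1"
  unfolding Fuv_def poly2_Fhom ..
lemma dyy_poly2: "dyy (poly2 c n) x y = Fvv c n x y 1"
  unfolding Fvv_def poly2_Fhom ..

lemma main_identity:
  assumes w: "w \<noteq> 0"
  shows "Qform c n (u, v, w) \<xi> =
              w ^ (n + 2) * IIf (poly2 c n) (rho (u, v, w)) (frechet_derivative rho (at (u, v, w)) \<xi>)"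
proof -
  obtain a b d where xi: "\<xi> = (a, b, d)" by (cases \<xi>) auto
  define P where "P = Fuu c n u v w"
  define Q where "Q = Fuv c n u v w"
  define R where "R = Fvv c n u v w"
  define P' where "P' = Fuu c n (u/w) (v/w) 1"
  define Q' where "Q' = Fuv c n (u/w) (v/w) 1"
  define R' where "R' = Fvv c n (u/w) (v/w) 1"
  have hP: "w^n * P' = w^2 * P" unfolding P_def P'_def by (rule Fuu_scale[OF w])
  have hQ: "w^n * Q' = w^2 * Q" unfolding Q_def Q'_def by (rule Fuv_scale[OF w])
  have hR: "w^n * R' = w^2 * R" unfolding R_def R'_def by (rule Fvv_scale[OF w])
  define X where "X = (a * w - u * d) / (w * w)"
  define Y where "Y = (b * w - v * d) / (w * w)"
  have "w ^ (n + 2) * IIf (poly2 c n) (rho (u, v, w)) (frechet_derivative rho (at (u, v, w)) \<xi>)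
      = w^(n+2) * (P' * X^2 + 2 * Q' * X * Y + R' * Y^2)"
    unfolding rho_deriv[OF w] xi IIf_def rho_def X_def Y_def P'_def Q'_def R'_def
    by (simp add: dxx_poly2 dxy_poly2 dyy_poly2)
  also have "\<dots> = w^2 * ((w^n * P') * X^2 + 2 * (w^n * Q') * X * Y + (w^n * R') * Y^2)"
    by (simp add: algebra_simps power_add power2_eq_square)
  also have "\<dots> = w^2 * ((w^2 * P) * X^2 + 2 * (w^2 * Q) * X * Y + (w^2 * R) * Y^2)"
    unfolding hP hQ hR ..
  also have "\<dots> = P * (w*w*X)^2 + 2 * Q * (w*w*X) * (w*w*Y) + R * (w*w*Y)^2"
    by (simp add: algebra_simps power2_eq_square)
  also have "w*w*X = a * w - u * d" unfolding X_def using w by simp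
  also have "w*w*Y = b * w - v * d" unfolding Y_def using w by simp
  also have "P * (a * w - u * d)^2 + 2 * Q * (a * w - u * d) * (b * w - v * d) + R * (b * w - v * d)^2
     = Qform c n (u, v, w) \<xi>"
    unfolding Qform_def xi Acoef_def Bcoef_def Scoef_def P_def Q_def R_def
    by (simp add: algebra_simps power2_eq_square)
  finally show ?thesis ..
qed



definition mon3 :: "(nat \<Rightarrow> nat \<Rightarrow> nat \<Rightarrow> real) \<Rightarrow> real \<Rightarrow> real \<Rightarrow> real \<Rightarrow> nat \<times> nat \<times> nat \<Rightarrow> real" where
  "mon3 a u v w x = (case x of (i,j,k) \<Rightarrow> a i j k * u ^ i * v ^ j * w ^ k)"

lemma box_eq: "(\<Sum>i\<le>N. \<Sum>j\<le>N. \<Sum>k\<le>N. a i j k * u ^ i * v ^ j * w ^ k :: real)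
   = (\<Sum>x\<in>{..N}\<times>{..N}\<times>{..N}. mon3 a u v w x)"
  by (simp add: sum.cartesian_product mon3_def)

lemma poly3_fun_iff: "poly3_fun g \<longleftrightarrow> (\<exists>N a. \<forall>u v w. g u v w = (\<Sum>x\<in>{..N}\<times>{..N}\<times>{..N}. mon3 a u v w x))"
  unfolding poly3_fun_def box_eq ..

definition ext3 where "ext3 N a i j k = (if i \<le> N \<and> j \<le> N \<and> k \<le> N then a i j k else (0::real))"

lemma box_ext:
  assumes "N \<le> M"
  shows "(\<Sum>x\<in>{..N}\<times>{..N}\<times>{..N}. mon3 a u v w x) = (\<Sum>x\<in>{..M}\<times>{..M}\<times>{..M}. mon3 (ext3 N a) u v w x)"
proof -
  have "(\<Sum>x\<in>{..M}\<times>{..M}\<times>{..M}. mon3 (ext3 N a) u v w x)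
      = (\<Sum>x\<in>{..M}\<times>{..M}\<times>{..M}. if x \<in> {..N}\<times>{..N}\<times>{..N} then mon3 a u v w x else 0)"
    by (rule sum.cong) (auto simp: mon3_def ext3_def split: if_splits)
  also have "\<dots> = (\<Sum>x\<in>({..M}\<times>{..M}\<times>{..M}) \<inter> ({..N}\<times>{..N}\<times>{..N}). mon3 a u v w x)"
    by (rule sum.inter_restrict[symmetric]) simp
  also have "({..M}\<times>{..M}\<times>{..M}) \<inter> ({..N}\<times>{..N}\<times>{..N}) = {..N}\<times>{..N}\<times>{..N}"
    using assms by auto
  finally show ?thesis by simp
qed

lemma poly3_zero: "poly3_fun (\<lambda>u v w. 0)"
  unfolding poly3_fun_def by (rule exI[of _ 0], rule exI[of _ "\<lambda>i j k. 0"]) simp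

lemma poly3_add:
  assumes "poly3_fun f" "poly3_fun g"
  shows "poly3_fun (\<lambda>u v w. f u v w + g u v w)"
proof -
  obtain N a where a: "\<And>u v w. f u v w = (\<Sum>x\<in>{..N}\<times>{..N}\<times>{..N}. mon3 a u v w x)"
    using assms(1) unfolding poly3_fun_iff by blast
  obtain N' b where b: "\<And>u v w. g u v w = (\<Sum>x\<in>{..N'}\<times>{..N'}\<times>{..N'}. mon3 b u v w x)"
    using assms(2) unfolding poly3_fun_iff by blast
  define M where "M = max N N'"
  have "\<forall>u v w. f u v w + g u v w = (\<Sum>x\<in>{..M}\<times>{..M}\<times>{..M}. mon3 (\<lambda>i j k. ext3 N a i j k + ext3 N' b i j k) u v w x)"
  proof (intro allI)
    fix u v w
    have "f u v w + g u v w = (\<Sum>x\<in>{..M}\<times>{..M}\<times>{..M}. mon3 (ext3 N a) u v w x) + (\<Sum>x\<in>{..M}\<times>{..M}\<times>{..M}. mon3 (ext3 N' b) u v w x)"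
      unfolding a b by (subst box_ext[of N M], simp add: M_def, subst box_ext[of N' M], simp_all add: M_def)
    also have "\<dots> = (\<Sum>x\<in>{..M}\<times>{..M}\<times>{..M}. mon3 (\<lambda>i j k. ext3 N a i j k + ext3 N' b i j k) u v w x)"
      by (simp add: sum.distrib[symmetric] mon3_def split_def algebra_simps)
    finally show "f u v w + g u v w = \<dots>" .
  qed
  then show ?thesis unfolding poly3_fun_iff by blast
qed

lemma poly3_scale:
  assumes "poly3_fun f"
  shows "poly3_fun (\<lambda>u v w. r * f u v w)"
proof -
  obtain N a where a: "\<And>u v w. f u v w = (\<Sum>x\<in>{..N}\<times>{..N}\<times>{..N}. mon3 a u v w x)"
    using assms(1) unfolding poly3_fun_iff by blast
  have "\<forall>u v w. r * f u v w = (\<Sum>x\<in>{..N}\<times>{..N}\<times>{..N}. mon3 (\<lambda>i j k. r * a i j k) u v w x)"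
    unfolding a by (simp add: sum_distrib_left mon3_def split_def algebra_simps)
  then show ?thesis unfolding poly3_fun_iff by blast
qed

lemma poly3_mono: "poly3_fun (\<lambda>u v w. r * u ^ i * v ^ j * w ^ k)"
proof -
  define N where "N = max i (max j k)"
  define a where "a = (\<lambda>i' j' k'. if (i',j',k') = (i,j,k) then r else 0)"
  have "\<forall>u v w. r * u ^ i * v ^ j * w ^ k = (\<Sum>x\<in>{..N}\<times>{..N}\<times>{..N}. mon3 a u v w x)"
  proof (intro allI)
    fix u v w
    have "(\<Sum>x\<in>{..N}\<times>{..N}\<times>{..N}. mon3 a u v w x) = (\<Sum>x\<in>{..N}\<times>{..N}\<times>{..N}. if x = (i,j,k) then r * u ^ i * v ^ j * w ^ k else 0)"
      by (rule sum.cong) (auto simp: mon3_def a_def split: if_splits)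
    also have "\<dots> = r * u ^ i * v ^ j * w ^ k"
      by (simp add: N_def max_def)
    finally show "r * u ^ i * v ^ j * w ^ k = (\<Sum>x\<in>{..N}\<times>{..N}\<times>{..N}. mon3 a u v w x)" ..
  qed
  then show ?thesis unfolding poly3_fun_iff by blast
qed

lemma poly3_sum:
  assumes "finite S" "\<And>s. s \<in> S \<Longrightarrow> poly3_fun (f s)"
  shows "poly3_fun (\<lambda>u v w. \<Sum>s\<in>S. f s u v w)"
  using assms
proof (induction S rule: finite_induct)
  case empty then show ?case by (simp add: poly3_zero)
next
  case (insert x F)
  then show ?case by (simp add: poly3_add)
qed

lemma poly3_G2form:
  assumes "finite K" "\<And>k. finite (I k)"
  shows "poly3_fun (\<lambda>u v w. \<Sum>k\<in>K. \<Sum>i\<in>I k. r k i * u ^ e1 k i * v ^ e2 k i * w ^ e3 k i)"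
  using assms by (intro poly3_sum poly3_mono) auto



lemma poly3_G2_gen:
  assumes "finite K" "\<And>k. finite (I k)"
  shows "poly3_fun (\<lambda>u v w. r * w^m * u^s * v^t * G2 K I (\<lambda>k i. w^(e k) * d k i) p q u v)"
proof -
  have "(\<lambda>u v w. r * w^m * u^s * v^t * G2 K I (\<lambda>k i. w^(e k) * d k i) p q u v)
     = (\<lambda>u v w. \<Sum>k\<in>K. \<Sum>i\<in>I k. (r * d k i) * u ^ (p k i + s) * v ^ (q k i + t) * w ^ (e k + m))"
    unfolding G2_def sum_distrib_left by (intro ext sum.cong refl) (simp add: power_add algebra_simps)
  then show ?thesis using poly3_G2form[OF assms] by simp
qed

lemma poly3_Fuu: "poly3_fun (\<lambda>u v w. r * w^m * u^s * v^t * Fuu c n u v w)"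
proof -
  have "\<And>u v w. Fuu c n u v w = G2 {..n} (\<lambda>k. {..k}) (\<lambda>k i. w^(n-k) * (c i (k-i) * real i * real (i - 1))) (\<lambda>k i. i - 1 - 1) (\<lambda>k i. k - i) u v"
    by (simp add: Fuu_G2 mult.assoc)
  then show ?thesis using poly3_G2_gen[of "{..n}" "\<lambda>k. {..k}"] by simp
qed

lemma poly3_Fuv: "poly3_fun (\<lambda>u v w. r * w^m * u^s * v^t * Fuv c n u v w)"
proof -
  have "\<And>u v w. Fuv c n u v w = G2 {..n} (\<lambda>k. {..k}) (\<lambda>k i. w^(n-k) * (c i (k-i) * real i * real (k - i))) (\<lambda>k i. i - 1) (\<lambda>k i. k - i - 1) u v"
    by (simp add: Fuv_G2 mult.assoc)
  then show ?thesis using poly3_G2_gen[of "{..n}" "\<lambda>k. {..k}"] by simp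
qed

lemma poly3_Fvv: "poly3_fun (\<lambda>u v w. r * w^m * u^s * v^t * Fvv c n u v w)"
proof -
  have "\<And>u v w. Fvv c n u v w = G2 {..n} (\<lambda>k. {..k}) (\<lambda>k i. w^(n-k) * (c i (k-i) * real (k - i) * real (k - i - 1))) (\<lambda>k i. i) (\<lambda>k i. k - i - 1 - 1) u v"
    by (simp add: Fvv_G2 mult.assoc)
  then show ?thesis using poly3_G2_gen[of "{..n}" "\<lambda>k. {..k}"] by simp
qed

theorem proposition1:
  fixes c :: "nat \<Rightarrow> nat \<Rightarrow> real" and n :: nat
  assumes "has_degree c n"
  shows "(\<forall>u v w \<xi>. w \<noteq> 0 \<longrightarrow>
            Qform c n (u, v, w) \<xi> =
              w ^ (n + 2) * IIf (poly2 c n) (rho (u, v, w)) (frechet_derivative rho (at (u, v, w)) \<xi>))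
       \<and> poly3_fun (\<lambda>u v w. w\<^sup>2 * Fuu c n u v w)
       \<and> poly3_fun (\<lambda>u v w. w\<^sup>2 * Fuv c n u v w)
       \<and> poly3_fun (\<lambda>u v w. w\<^sup>2 * Fvv c n u v w)
       \<and> poly3_fun (\<lambda>u v w. w * Acoef c n u v w)
       \<and> poly3_fun (\<lambda>u v w. w * Bcoef c n u v w)
       \<and> poly3_fun (\<lambda>u v w. Scoef c n u v w)
       \<and> (\<forall>u v w. (u, v, w) \<in> sphere2 \<and> w \<noteq> 0 \<longrightarrow>
            w ^ (n + 2) \<noteq> 0 \<and>
            (\<forall>\<xi>. tangent_S2 (u, v, w) \<xi> \<longrightarrow>
               Qform c n (u, v, w) \<xi> =
                 w ^ (n + 2) * IIf (poly2 c n) (rho (u, v, w)) (frechet_derivative rho (at (u, v, w)) \<xi>)))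
       \<and> (\<forall>u v. (u, v, 0) \<in> sphere2 \<longrightarrow> Qform c n (u, v, 0) (- v, u, 0) = 0)"
proof (intro conjI allI impI)
  show "poly3_fun (\<lambda>u v w. w\<^sup>2 * Fuu c n u v w)"
    using poly3_Fuu[of 1 2 0 0 c n] by simp
  show "poly3_fun (\<lambda>u v w. w\<^sup>2 * Fuv c n u v w)"
    using poly3_Fuv[of 1 2 0 0 c n] by simp
  show "poly3_fun (\<lambda>u v w. w\<^sup>2 * Fvv c n u v w)"
    using poly3_Fvv[of 1 2 0 0 c n] by simp
  show "poly3_fun (\<lambda>u v w. w * Acoef c n u v w)"
    using poly3_add[OF poly3_Fuu[of "-1" 1 1 0 c n] poly3_Fuv[of "-1" 1 0 1 c n]]
    by (simp add: Acoef_def algebra_simps)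
  show "poly3_fun (\<lambda>u v w. w * Bcoef c n u v w)"
    using poly3_add[OF poly3_Fuv[of "-1" 1 1 0 c n] poly3_Fvv[of "-1" 1 0 1 c n]]
    by (simp add: Bcoef_def algebra_simps)
  show "poly3_fun (\<lambda>u v w. Scoef c n u v w)"
    using poly3_add[OF poly3_add[OF poly3_Fuu[of 1 0 2 0 c n] poly3_Fuv[of 2 0 1 1 c n]] poly3_Fvv[of 1 0 0 2 c n]]
    by (simp add: Scoef_def algebra_simps)
next
  fix u v w :: real and \<xi> :: "real \<times> real \<times> real" assume "w \<noteq> 0"
  then show "Qform c n (u, v, w) \<xi> =
              w ^ (n + 2) * IIf (poly2 c n) (rho (u, v, w)) (frechet_derivative rho (at (u, v, w)) \<xi>)"
    by (rule main_identity)
next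
  fix u v w :: real assume "(u, v, w) \<in> sphere2 \<and> w \<noteq> 0"
  then show "w ^ (n + 2) \<noteq> 0" by simp
next
  fix u v w :: real and \<xi> :: "real \<times> real \<times> real" assume "(u, v, w) \<in> sphere2 \<and> w \<noteq> 0"
  then show "Qform c n (u, v, w) \<xi> =
              w ^ (n + 2) * IIf (poly2 c n) (rho (u, v, w)) (frechet_derivative rho (at (u, v, w)) \<xi>)"
    using main_identity by blast
next
  fix u v :: real
  show "Qform c n (u, v, 0) (- v, u, 0) = 0" by (simp add: Qform_def)
qed

end
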